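(* Let $\mathcal U\subseteq M(\mathbb C)^g$ be a non-commutative domain and let $f:\mathcal U\to M(\mathbb C)^{\tilde g}$ be a free map. Suppose $X\in\mathcal U(n)$, $Y\in\mathcal U(m)$, $\Gamma$ is an $n\times m$ complex matrix, and $f(X)\Gamma=\Gamma f(Y)$. If $f[n+m]^{-1}\big(\{f(X)\oplus f(Y)\}\big)$ has compact closure in $\mathcal U(n+m)$, then $X\Gamma=\Gamma Y$.
   Context: $M_n(\mathbb C)^g$ denotes $g$-tuples $X=(X_1,\dots,X_g)$ of $n\times n$ complex matrices; $X\Gamma=(X_1\Gamma,\dots,X_g\Gamma)$, $\Gamma Y=(\Gamma Y_1,\dots,\Gamma Y_g)$, $U^*XU$ entrywise, $X\oplus Y=(X_1\oplus Y_1,\dots,X_g\oplus Y_g)$ (block diagonal). A non-commutative set $\mathcal U\subseteq M(\mathbb C)^g$ is a sequence $(\mathcal U(n))_n$, $\mathcal U(n)\subseteq M_n(\mathbb C)^g$, closed under simultaneous unitary similarity and under direct sums; it is a non-commutative domain if each $\mathcal U(n)$ is open and connected. A free map $f:\mathcal U\to M(\mathbb C)^{\tilde g}$ is a sequence of functions $f[n]:\mathcal U(n)\to M_n(\mathbb C)^{\tilde g}$ such that whenever $X\in\mathcal U(n)$, $Y\in\mathcal U(m)$, $\Gamma\in\mathbb C^{n\times m}$ with $X\Gamma=\Gamma Y$, then $f[n](X)\Gamma=\Gamma f[m](Y)$; one writes $f(X)=f[n](X)$. *)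

theory Defs
  imports "HOL-Analysis.Analysis" "Jordan_Normal_Form.Matrix"
begin

definition tuples :: "nat \<Rightarrow> nat \<Rightarrow> complex mat list set" where
  "tuples g n = {X. length X = g \<and> (\<forall>A\<in>set X. A \<in> carrier_mat n n)}"

definition adj :: "complex mat \<Rightarrow> complex mat" where
  "adj A = mat (dim_col A) (dim_row A) (\<lambda>(i,j). cnj (A $$ (j,i)))"

definition unitary_mat :: "nat \<Rightarrow> complex mat \<Rightarrow> bool" where
  "unitary_mat n U \<longleftrightarrow> U \<in> carrier_mat n n \<and> adj U * U = 1\<^sub>m n"

definition tmult_r :: "complex mat list \<Rightarrow> complex mat \<Rightarrow> complex mat list" where
  "tmult_r X G = map (\<lambda>A. A * G) X"

definition tmult_l :: "complex mat \<Rightarrow> complex mat list \<Rightarrow> complex mat list" where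
  "tmult_l G Y = map (\<lambda>A. G * A) Y"

definition tconj :: "complex mat \<Rightarrow> complex mat list \<Rightarrow> complex mat list" where
  "tconj U X = map (\<lambda>A. adj U * A * U) X"

definition dsum :: "complex mat \<Rightarrow> complex mat \<Rightarrow> complex mat" where
  "dsum A B = four_block_mat A (0\<^sub>m (dim_row A) (dim_col B)) (0\<^sub>m (dim_row B) (dim_col A)) B"

definition tdsum :: "complex mat list \<Rightarrow> complex mat list \<Rightarrow> complex mat list" where
  "tdsum X Y = map2 dsum X Y"

text \<open>Topology on M_n(C)^g: the Euclidean topology, obtained by pulling back the
  product topology along the (injective) flattening into coordinate functions;
  on tuples of fixed size only finitely many coordinates vary, so this is the usual
  topology of C^(g n^2).\<close>
definition tflat :: "complex mat list \<Rightarrow> (nat \<times> nat \<times> nat \<Rightarrow> complex)" where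
  "tflat X = (\<lambda>(k,i,j). if k < length X \<and> i < dim_row (X!k) \<and> j < dim_col (X!k)
                          then X!k $$ (i,j) else 0)"

definition mtop :: "nat \<Rightarrow> nat \<Rightarrow> complex mat list topology" where
  "mtop g n = pullback_topology (tuples g n) tflat euclidean"

definition nc_set :: "nat \<Rightarrow> (nat \<Rightarrow> complex mat list set) \<Rightarrow> bool" where
  "nc_set g U \<longleftrightarrow>
     (\<forall>n>0. U n \<subseteq> tuples g n) \<and>
     (\<forall>n>0. \<forall>X\<in>U n. \<forall>V. unitary_mat n V \<longrightarrow> tconj V X \<in> U n) \<and>
     (\<forall>n>0. \<forall>m>0. \<forall>X\<in>U n. \<forall>Y\<in>U m. tdsum X Y \<in> U (n + m))"

definition nc_domain :: "nat \<Rightarrow> (nat \<Rightarrow> complex mat list set) \<Rightarrow> bool" where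
  "nc_domain g U \<longleftrightarrow> nc_set g U \<and>
     (\<forall>n>0. openin (mtop g n) (U n) \<and> connectedin (mtop g n) (U n))"

definition free_map ::
  "nat \<Rightarrow> nat \<Rightarrow> (nat \<Rightarrow> complex mat list set) \<Rightarrow> (nat \<Rightarrow> complex mat list \<Rightarrow> complex mat list) \<Rightarrow> bool" where
  "free_map g g' U f \<longleftrightarrow>
     (\<forall>n>0. \<forall>X\<in>U n. f n X \<in> tuples g' n) \<and>
     (\<forall>n>0. \<forall>m>0. \<forall>X\<in>U n. \<forall>Y\<in>U m. \<forall>G\<in>carrier_mat n m.
        tmult_r X G = tmult_l G Y \<longrightarrow> tmult_r (f n X) G = tmult_l G (f m Y))"

end

theory Submission
  imports Defs
begin

definition Sm :: "nat \<Rightarrow> nat \<Rightarrow> complex \<Rightarrow> complex mat \<Rightarrow> complex mat" where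
  "Sm n m c G = four_block_mat (1\<^sub>m n) (c \<cdot>\<^sub>m G) (0\<^sub>m m n) (1\<^sub>m m)"

definition Zm :: "complex \<Rightarrow> complex mat \<Rightarrow> complex mat \<Rightarrow> complex mat \<Rightarrow> complex mat" where
  "Zm c G A B = four_block_mat A (c \<cdot>\<^sub>m (A * G - G * B)) (0\<^sub>m (dim_row B) (dim_col A)) B"

lemma dsum_carrier: "A \<in> carrier_mat n n \<Longrightarrow> B \<in> carrier_mat m m \<Longrightarrow> dsum A B \<in> carrier_mat (n+m) (n+m)"
  unfolding dsum_def by auto

lemma Zm_carrier: "A \<in> carrier_mat n n \<Longrightarrow> B \<in> carrier_mat m m \<Longrightarrow> Zm c G A B \<in> carrier_mat (n+m) (n+m)"
  unfolding Zm_def by auto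

lemma Sm_carrier: "Sm n m c G \<in> carrier_mat (n+m) (n+m)"
  unfolding Sm_def by auto

lemma L1:
  assumes A: "A \<in> carrier_mat n n" and B: "B \<in> carrier_mat m m" and G: "G \<in> carrier_mat n m"
  shows "dsum A B * Sm n m c G = Sm n m c G * Zm c G A B"
proof -
  have d: "dsum A B = four_block_mat A (0\<^sub>m n m) (0\<^sub>m m n) B" using A B unfolding dsum_def by auto
  have z: "Zm c G A B = four_block_mat A (c \<cdot>\<^sub>m (A * G - G * B)) (0\<^sub>m m n) B" using A B unfolding Zm_def by auto
  have c1: "1\<^sub>m n \<in> carrier_mat n n" "0\<^sub>m m n \<in> carrier_mat m n" "1\<^sub>m m \<in> carrier_mat m m"
    "0\<^sub>m n m \<in> carrier_mat n m" "c \<cdot>\<^sub>m G \<in> carrier_mat n m"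
    "c \<cdot>\<^sub>m (A * G - G * B) \<in> carrier_mat n m" using G A B by auto
  show ?thesis unfolding d z Sm_def
    apply (subst mult_four_block_mat[OF A c1(4) c1(2) B c1(1) c1(5) c1(2) c1(3)])
    apply (subst mult_four_block_mat[OF c1(1) c1(5) c1(2) c1(3) A c1(6) c1(2) B])
    apply (rule cong_four_block_mat)
    using A B G by (auto intro!: eq_matI simp: scalar_prod_def sum_distrib_left algebra_simps sum_subtractf)
qed

lemma L2:
  assumes A: "A \<in> carrier_mat n n" and B: "B \<in> carrier_mat m m" and G: "G \<in> carrier_mat n m"
    and e: "A * G = G * B"
  shows "Zm c G A B = dsum A B"
  unfolding Zm_def dsum_def e using A B G by (auto intro!: eq_matI)

lemma L0:
  assumes A: "A \<in> carrier_mat n n" and B: "B \<in> carrier_mat m m" and G: "G \<in> carrier_mat n m"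
  shows "Zm 0 G A B = dsum A B"
  unfolding Zm_def dsum_def using A B G by (auto intro!: eq_matI)

lemma L3:
  assumes G: "G \<in> carrier_mat n m"
  shows "Sm n m (-c) G * Sm n m c G = 1\<^sub>m (n+m)"
proof -
  have c1: "1\<^sub>m n \<in> carrier_mat n n" "0\<^sub>m m n \<in> carrier_mat m n" "1\<^sub>m m \<in> carrier_mat m m"
    "(-c) \<cdot>\<^sub>m G \<in> carrier_mat n m" "c \<cdot>\<^sub>m G \<in> carrier_mat n m" using G by auto
  show ?thesis unfolding Sm_def
    apply (subst mult_four_block_mat[OF c1(1) c1(4) c1(2) c1(3) c1(1) c1(5) c1(2) c1(3)])
    apply (subst four_block_one_mat[symmetric])
    apply (rule cong_four_block_mat)
    using G by (auto intro!: eq_matI)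
qed

definition E1 :: "nat \<Rightarrow> nat \<Rightarrow> complex mat" where
  "E1 n m = mat (n+m) n (\<lambda>(i,j). if i = j then 1 else 0)"
definition E2 :: "nat \<Rightarrow> nat \<Rightarrow> complex mat" where
  "E2 n m = mat (n+m) m (\<lambda>(i,j). if i = j + n then 1 else 0)"

lemma sum_delta_mult: assumes "j < (N::nat)" shows "(\<Sum>k = 0..<N. (w k :: complex) * (if k = j then 1 else 0)) = w j"
proof -
  have e: "(\<lambda>k. w k * (if k = j then 1 else 0)) = (\<lambda>k. if k = j then w k else 0)" by auto
  show ?thesis unfolding e using assms by (simp add: sum.delta sum.delta' atLeast0LessThan)
qed

lemma sum_delta_mult2: assumes "j < (N::nat)" shows "(\<Sum>k = 0..<N. (if j = k then 1 else 0) * (w k :: complex)) = w j"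
proof -
  have e: "(\<lambda>k. (if j = k then 1 else 0) * w k) = (\<lambda>k. if j = k then w k else 0)" by auto
  show ?thesis unfolding e using assms by (simp add: sum.delta sum.delta' atLeast0LessThan)
qed

lemma E1_right: "W \<in> carrier_mat (n+m) (n+m) \<Longrightarrow> i < n+m \<Longrightarrow> j < n \<Longrightarrow> (W * E1 n m) $$ (i,j) = W $$ (i,j)"
  unfolding E1_def by (simp add: scalar_prod_def sum_delta_mult)

lemma E2_right: "W \<in> carrier_mat (n+m) (n+m) \<Longrightarrow> i < n+m \<Longrightarrow> j < m \<Longrightarrow> (W * E2 n m) $$ (i,j) = W $$ (i,j+n)"
proof -
  assume W: "W \<in> carrier_mat (n+m) (n+m)" and ij: "i < n+m" "j < m"
  have "(W * E2 n m) $$ (i,j) = (\<Sum>k = 0..<n+m. W $$ (i,k) * (if k = j + n then 1 else 0))"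
    using W ij unfolding E2_def by (simp add: scalar_prod_def)
  also have "\<dots> = W $$ (i,j+n)" using ij by (intro sum_delta_mult) auto
  finally show ?thesis .
qed

lemma E1_left: "A \<in> carrier_mat n n \<Longrightarrow> i < n+m \<Longrightarrow> j < n \<Longrightarrow> (E1 n m * A) $$ (i,j) = (if i < n then A $$ (i,j) else 0)"
  unfolding E1_def by (simp add: scalar_prod_def sum_delta_mult2)

lemma E2_left: "B \<in> carrier_mat m m \<Longrightarrow> i < n+m \<Longrightarrow> j < m \<Longrightarrow> (E2 n m * B) $$ (i,j) = (if i < n then 0 else B $$ (i-n,j))"
proof -
  assume B: "B \<in> carrier_mat m m" and ij: "i < n+m" "j < m"
  have "(E2 n m * B) $$ (i,j) = (\<Sum>k = 0..<m. (if i = k + n then 1 else 0) * B $$ (k,j))"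
    using B ij unfolding E2_def by (simp add: scalar_prod_def)
  also have "\<dots> = (if i < n then 0 else B $$ (i-n,j))"
  proof (cases "i < n")
    case True then show ?thesis by simp
  next
    case False
    then have "(\<Sum>k = 0..<m. (if i = k + n then 1 else 0) * B $$ (k,j)) = (\<Sum>k = 0..<m. (if i - n = k then 1 else 0) * B $$ (k,j))"
      by (intro sum.cong) auto
    also have "\<dots> = B $$ (i-n,j)" using False ij by (intro sum_delta_mult2) auto
    finally show ?thesis using False by simp
  qed
  finally show ?thesis .
qed

lemma E_carrier: "E1 n m \<in> carrier_mat (n+m) n" "E2 n m \<in> carrier_mat (n+m) m"
  unfolding E1_def E2_def by auto

lemma inj_dsum:
  assumes W: "W \<in> carrier_mat (n+m) (n+m)" and A: "A \<in> carrier_mat n n" and B: "B \<in> carrier_mat m m"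
    and e1: "W * E1 n m = E1 n m * A" and e2: "W * E2 n m = E2 n m * B"
  shows "W = dsum A B"
proof (rule eq_matI)
  show "dim_row W = dim_row (dsum A B)" "dim_col W = dim_col (dsum A B)" using W A B unfolding dsum_def by auto
  fix i j assume ij: "i < dim_row (dsum A B)" "j < dim_col (dsum A B)"
  then have ij': "i < n+m" "j < n+m" using A B unfolding dsum_def by auto
  show "W $$ (i,j) = dsum A B $$ (i,j)"
  proof (cases "j < n")
    case True
    have "W $$ (i,j) = (W * E1 n m) $$ (i,j)" using E1_right[OF W ij'(1) True] by simp
    also have "\<dots> = (if i < n then A $$ (i,j) else 0)" unfolding e1 using E1_left[OF A ij'(1) True] .
    finally show ?thesis using True ij' A B unfolding dsum_def by auto
  next
    case False
    then have j: "j - n < m" using ij' by auto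
    have "W $$ (i,j) = (W * E2 n m) $$ (i,j-n)" using E2_right[OF W ij'(1) j] False by simp
    also have "\<dots> = (if i < n then 0 else B $$ (i-n,j-n))" unfolding e2 using E2_left[OF B ij'(1) j] .
    finally show ?thesis using False ij' A B unfolding dsum_def by auto
  qed
qed

lemma dsum_E1: assumes A: "A \<in> carrier_mat n n" and B: "B \<in> carrier_mat m m"
  shows "dsum A B * E1 n m = E1 n m * A"
proof (rule eq_matI)
  fix i j assume "i < dim_row (E1 n m * A)" "j < dim_col (E1 n m * A)"
  then have ij: "i < n+m" "j < n" using A E_carrier[of n m] by auto
  show "(dsum A B * E1 n m) $$ (i,j) = (E1 n m * A) $$ (i,j)"
    unfolding E1_right[OF dsum_carrier[OF A B] ij] E1_left[OF A ij] using A B ij by (auto simp: dsum_def)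
qed (use A B E_carrier[of n m] dsum_carrier[OF A B] in auto)

lemma dsum_E2: assumes A: "A \<in> carrier_mat n n" and B: "B \<in> carrier_mat m m"
  shows "dsum A B * E2 n m = E2 n m * B"
proof (rule eq_matI)
  fix i j assume "i < dim_row (E2 n m * B)" "j < dim_col (E2 n m * B)"
  then have ij: "i < n+m" "j < m" using B E_carrier[of n m] by auto
  show "(dsum A B * E2 n m) $$ (i,j) = (E2 n m * B) $$ (i,j)"
    unfolding E2_right[OF dsum_carrier[OF A B] ij] E2_left[OF B ij] using A B ij by (auto simp: dsum_def)
qed (use A B E_carrier[of n m] dsum_carrier[OF A B] in auto)

lemma tflat_inj:
  assumes "A \<in> tuples g N" "B \<in> tuples g N" "tflat A = tflat B"
  shows "A = B"
proof (rule nth_equalityI)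
  show l: "length A = length B" using assms(1,2) unfolding tuples_def by auto
  fix k assume k: "k < length A"
  have cA: "A!k \<in> carrier_mat N N" and cB: "B!k \<in> carrier_mat N N"
    using assms(1,2) k l unfolding tuples_def by auto
  show "A!k = B!k"
  proof (rule eq_matI)
    fix i j assume "i < dim_row (B!k)" "j < dim_col (B!k)"
    then have ij: "i < N" "j < N" using cB by auto
    have "tflat A (k,i,j) = tflat B (k,i,j)" using assms(3) by simp
    then show "A!k $$ (i,j) = B!k $$ (i,j)" unfolding tflat_def using k l ij cA cB by auto
  qed (use cA cB in auto)
qed

lemma Zm_entry:
  assumes A: "A \<in> carrier_mat n n" and B: "B \<in> carrier_mat m m" and G: "G \<in> carrier_mat n m"
    and ij: "i < n+m" "j < n+m"
  shows "Zm c G A B $$ (i,j) = Zm 0 G A B $$ (i,j) + c * (Zm 1 G A B $$ (i,j) - Zm 0 G A B $$ (i,j))"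
  using A B G ij unfolding Zm_def by auto

lemma tflat_Zm:
  assumes lX: "length X = g" and lY: "length Y = g"
    and cX: "\<And>k. k < g \<Longrightarrow> X!k \<in> carrier_mat n n" and cY: "\<And>k. k < g \<Longrightarrow> Y!k \<in> carrier_mat m m"
    and G: "G \<in> carrier_mat n m"
  shows "tflat (map2 (Zm c G) X Y) p = tflat (map2 (Zm 0 G) X Y) p
     + c * (tflat (map2 (Zm 1 G) X Y) p - tflat (map2 (Zm 0 G) X Y) p)"
proof -
  obtain k i j where p: "p = (k,i,j)" by (cases p) auto
  show ?thesis
  proof (cases "k < g \<and> i < n+m \<and> j < n+m")
    case True
    have d: "\<And>c. dim_row (Zm c G (X!k) (Y!k)) = n+m \<and> dim_col (Zm c G (X!k) (Y!k)) = n+m"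
      using Zm_carrier[OF cX[of k] cY[of k]] True by auto
    show ?thesis unfolding p tflat_def using Zm_entry[OF cX[of k] cY[of k] G, where c=c and i=i and j=j] True lX lY d
      by simp
  next
    case False
    have d: "dim_row (Zm c G (X!k) (Y!k)) = n+m \<and> dim_col (Zm c G (X!k) (Y!k)) = n+m" if "k < g" for c
      using Zm_carrier[OF cX[OF that] cY[OF that]] by auto
    have z: "tflat (map2 (Zm c' G) X Y) (k,i,j) = 0" for c'
    proof (cases "k < g")
      case True
      then show ?thesis unfolding tflat_def using False True d[OF True, of c'] lX lY by auto
    next
      case False
      then show ?thesis unfolding tflat_def using lX lY by simp
    qed
    show ?thesis unfolding p z by simp
  qed
qed

theorem proposition3p3:
  fixes g g' n m :: nat and U :: "nat \<Rightarrow> complex mat list set"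
    and f :: "nat \<Rightarrow> complex mat list \<Rightarrow> complex mat list"
    and X Y :: "complex mat list" and \<Gamma> :: "complex mat"
  assumes "nc_domain g U" and "free_map g g' U f"
    and "n > 0" and "m > 0"
    and "X \<in> U n" and "Y \<in> U m" and "\<Gamma> \<in> carrier_mat n m"
    and "tmult_r (f n X) \<Gamma> = tmult_l \<Gamma> (f m Y)"
    and "compactin (subtopology (mtop g (n + m)) (U (n + m)))
           ((subtopology (mtop g (n + m)) (U (n + m))) closure_of
              {Z \<in> U (n + m). f (n + m) Z = tdsum (f n X) (f m Y)})"
  shows "tmult_r X \<Gamma> = tmult_l \<Gamma> Y"
proof -
  define N where "N = n + m"
  have N0: "N > 0" using assms(3) N_def by auto
  have ncs: "nc_set g U" and opn: "openin (mtop g N) (U N)" using assms(1) N0 unfolding nc_domain_def by auto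
  have Utup: "\<And>k. k>0 \<Longrightarrow> U k \<subseteq> tuples g k" using ncs unfolding nc_set_def by auto
  have Xt: "X \<in> tuples g n" using Utup assms(3,5) by auto
  have Yt: "Y \<in> tuples g m" using Utup assms(4,6) by auto
  have XY: "tdsum X Y \<in> U N" using ncs assms(3-6) unfolding nc_set_def N_def by auto
  have lX: "length X = g" and cX: "\<And>k. k<g \<Longrightarrow> X!k \<in> carrier_mat n n" using Xt unfolding tuples_def by auto
  have lY: "length Y = g" and cY: "\<And>k. k<g \<Longrightarrow> Y!k \<in> carrier_mat m m" using Yt unfolding tuples_def by auto
  have fm1: "\<And>k Z. k>0 \<Longrightarrow> Z \<in> U k \<Longrightarrow> f k Z \<in> tuples g' k" using assms(2) unfolding free_map_def by auto
  have fm2: "\<And>a b A B G. a>0 \<Longrightarrow> b>0 \<Longrightarrow> A\<in>U a \<Longrightarrow> B\<in>U b \<Longrightarrow> G\<in>carrier_mat a b \<Longrightarrow>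
      tmult_r A G = tmult_l G B \<Longrightarrow> tmult_r (f a A) G = tmult_l G (f b B)"
    using assms(2) unfolding free_map_def by blast
  define FX where "FX = f n X"
  define FY where "FY = f m Y"
  have lFX: "length FX = g'" and cFX: "\<And>k. k<g' \<Longrightarrow> FX!k \<in> carrier_mat n n"
    using fm1[OF assms(3,5)] unfolding FX_def tuples_def by auto
  have lFY: "length FY = g'" and cFY: "\<And>k. k<g' \<Longrightarrow> FY!k \<in> carrier_mat m m"
    using fm1[OF assms(4,6)] unfolding FY_def tuples_def by auto
  have G: "\<Gamma> \<in> carrier_mat n m" by (rule assms(7))
  have comm: "FX!k * \<Gamma> = \<Gamma> * FY!k" if k: "k<g'" for k
  proof -
    have "(tmult_r FX \<Gamma>) ! k = (tmult_l \<Gamma> FY) ! k" using assms(8) unfolding FX_def FY_def by simp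
    then show ?thesis unfolding tmult_r_def tmult_l_def using k lFX lFY by simp
  qed
  have fA: "f N (tdsum X Y) = tdsum FX FY"
  proof -
    have e1: "tmult_r (tdsum X Y) (E1 n m) = tmult_l (E1 n m) X"
      unfolding tmult_r_def tmult_l_def tdsum_def
      by (rule nth_equalityI) (auto simp: lX lY cX cY dsum_E1)
    have e2: "tmult_r (tdsum X Y) (E2 n m) = tmult_l (E2 n m) Y"
      unfolding tmult_r_def tmult_l_def tdsum_def
      by (rule nth_equalityI) (auto simp: lX lY cX cY dsum_E2)
    have e1': "tmult_r (f N (tdsum X Y)) (E1 n m) = tmult_l (E1 n m) FX"
      using fm2[OF N0 assms(3) XY assms(5) _ e1] E_carrier[of n m] unfolding FX_def N_def by auto
    have e2': "tmult_r (f N (tdsum X Y)) (E2 n m) = tmult_l (E2 n m) FY"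
      using fm2[OF N0 assms(4) XY assms(6) _ e2] E_carrier[of n m] unfolding FY_def N_def by auto
    have W: "f N (tdsum X Y) \<in> tuples g' N" using fm1[OF N0 XY] .
    show ?thesis
    proof (rule nth_equalityI)
      show "length (f N (tdsum X Y)) = length (tdsum FX FY)"
        using W lFX lFY unfolding tuples_def tdsum_def by auto
      fix k assume "k < length (f N (tdsum X Y))"
      then have k: "k < g'" using W unfolding tuples_def by auto
      have Wk: "f N (tdsum X Y) ! k \<in> carrier_mat (n+m) (n+m)" using W k unfolding tuples_def N_def by auto
      have a1: "f N (tdsum X Y) ! k * E1 n m = E1 n m * FX!k"
        using arg_cong[OF e1', of "\<lambda>l. l!k"] k lFX W unfolding tmult_r_def tmult_l_def tuples_def by auto
      have a2: "f N (tdsum X Y) ! k * E2 n m = E2 n m * FY!k"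
        using arg_cong[OF e2', of "\<lambda>l. l!k"] k lFY W unfolding tmult_r_def tmult_l_def tuples_def by auto
      show "f N (tdsum X Y) ! k = tdsum FX FY ! k"
        using inj_dsum[OF Wk cFX[OF k] cFY[OF k] a1 a2] k lFX lFY unfolding tdsum_def by simp
    qed
  qed

  define Z where "Z t = map2 (Zm (complex_of_real t) \<Gamma>) X Y" for t :: real
  have Zt: "Z t \<in> tuples g N" for t
    unfolding tuples_def Z_def N_def using lX lY Zm_carrier[OF cX cY]
    by (auto simp: in_set_conv_nth)
  have Z0: "Z 0 = tdsum X Y"
    unfolding Z_def tdsum_def by (rule nth_equalityI) (auto simp: lX lY L0[OF cX cY G])
  have fB: "f N (Z t) = tdsum FX FY" if ZU: "Z t \<in> U N" for t
  proof -
    define c where "c = complex_of_real t"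
    define S where "S = Sm n m c \<Gamma>"
    define S' where "S' = Sm n m (-c) \<Gamma>"
    have cS: "S \<in> carrier_mat N N" "S' \<in> carrier_mat N N" unfolding S_def S'_def N_def using Sm_carrier by auto
    have SS: "S' * S = 1\<^sub>m N" unfolding S_def S'_def N_def using L3[OF G] .
    have e: "tmult_r (tdsum X Y) S = tmult_l S (Z t)"
      unfolding tmult_r_def tmult_l_def tdsum_def Z_def S_def c_def
      by (rule nth_equalityI) (auto simp: lX lY L1[OF cX cY G])
    have e': "tmult_r (f N (tdsum X Y)) S = tmult_l S (f N (Z t))"
      using fm2[OF N0 N0 XY ZU cS(1) e] .
    have W: "f N (Z t) \<in> tuples g' N" using fm1[OF N0 ZU] .
    show ?thesis
    proof (rule nth_equalityI)
      show "length (f N (Z t)) = length (tdsum FX FY)"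
        using W lFX lFY unfolding tuples_def tdsum_def by auto
      fix k assume "k < length (f N (Z t))"
      then have k: "k < g'" using W unfolding tuples_def by auto
      define Wk where "Wk = f N (Z t) ! k"
      have Wk: "Wk \<in> carrier_mat N N" using W k unfolding tuples_def Wk_def by auto
      have D: "tdsum FX FY ! k = dsum (FX!k) (FY!k)" unfolding tdsum_def using k lFX lFY by simp
      have cD: "dsum (FX!k) (FY!k) \<in> carrier_mat N N" unfolding N_def by (rule dsum_carrier[OF cFX[OF k] cFY[OF k]])
      have a: "dsum (FX!k) (FY!k) * S = S * Wk"
        using arg_cong[OF e', of "\<lambda>l. l!k"] k W unfolding fA tmult_r_def tmult_l_def tuples_def Wk_def
        by (simp add: D lFX lFY tdsum_def[of FX FY])
      have b: "dsum (FX!k) (FY!k) * S = S * dsum (FX!k) (FY!k)"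
        using L1[OF cFX[OF k] cFY[OF k] G, of c] L2[OF cFX[OF k] cFY[OF k] G comm[OF k], of c]
        unfolding S_def by simp
      have "Wk = S' * S * Wk" using Wk by (simp add: SS)
      also have "\<dots> = S' * (S * Wk)" using cS Wk by (simp add: assoc_mult_mat)
      also have "\<dots> = S' * (S * dsum (FX!k) (FY!k))" using a b by simp
      also have "\<dots> = S' * S * dsum (FX!k) (FY!k)" using cS cD by (simp add: assoc_mult_mat)
      also have "\<dots> = dsum (FX!k) (FY!k)" using cD by (simp add: SS)
      finally show "f N (Z t) ! k = tdsum FX FY ! k" unfolding Wk_def D .
    qed
  qed
  define F where "F = {Z \<in> U N. f N Z = tdsum FX FY}"
  define K where "K = subtopology (mtop g N) (U N) closure_of F"
  have cK: "compactin (subtopology (mtop g N) (U N)) K"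
    using assms(9) unfolding K_def F_def N_def FX_def FY_def .
  have topm: "topspace (mtop g N) = tuples g N"
    unfolding mtop_def topspace_pullback_topology by simp
  have KU: "K \<subseteq> U N"
    using closure_of_subset_topspace[of "subtopology (mtop g N) (U N)" F] unfolding K_def by auto
  have FK: "F \<subseteq> K"
    unfolding K_def by (rule closure_of_subset) (use Utup[OF N0] in \<open>auto simp: topm F_def\<close>)
  have cK1: "compactin (mtop g N) K" using cK compactin_subtopology by blast
  have ctf: "continuous_map (mtop g N) euclidean tflat"
    unfolding mtop_def using continuous_map_pullback[of euclidean euclidean id "tuples g N" tflat] by simp
  have cpt: "compact (tflat ` K)"
    using image_compactin[OF cK1 ctf] by simp
  have Hs: "Hausdorff_space (euclidean :: (nat \<times> nat \<times> nat \<Rightarrow> complex) topology)"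
    unfolding euclidean_product_topology[symmetric] Hausdorff_space_product_topology by simp
  have clK: "closed (tflat ` K)"
    using compactin_imp_closedin[OF Hs] image_compactin[OF cK1 ctf] by simp
  define h where "h t = tflat (Z t)" for t
  define a where "a = tflat (map2 (Zm 0 \<Gamma>) X Y)"
  define b where "b p = tflat (map2 (Zm 1 \<Gamma>) X Y) p - a p" for p
  have hab: "h t p = a p + complex_of_real t * b p" for t p
    unfolding h_def Z_def a_def b_def by (rule tflat_Zm[OF lX lY cX cY G])
  have hcont: "continuous_on UNIV h"
    unfolding hab[abs_def] by (intro continuous_on_coordinatewise_then_product continuous_intros)
  define T where "T = {t. Z t \<in> U N}"
  obtain Ob where Ob: "openin euclidean Ob" "U N = tflat -` Ob \<inter> tuples g N"
    using opn unfolding mtop_def openin_pullback_topology by blast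
  have "T = h -` Ob" unfolding T_def h_def using Ob(2) Zt by auto
  then have oT: "open T" using hcont Ob(1) continuous_on_open_vimage[of UNIV h] by simp
  have "T = h -` (tflat ` K)"
  proof
    show "T \<subseteq> h -` (tflat ` K)" unfolding T_def h_def using fB FK unfolding F_def by auto
    show "h -` (tflat ` K) \<subseteq> T"
    proof
      fix t assume "t \<in> h -` (tflat ` K)"
      then obtain W where W: "W \<in> K" "tflat (Z t) = tflat W" unfolding h_def by auto
      have "W \<in> tuples g N" using W(1) KU Utup[OF N0] by auto
      then have "Z t = W" using tflat_inj[OF Zt _ W(2)] by simp
      then show "t \<in> T" unfolding T_def using W(1) KU by auto
    qed
  qed
  then have cT: "closed T" using hcont clK continuous_on_closed_vimage[of UNIV h] by simp
  have "0 \<in> T" unfolding T_def using Z0 XY by simp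
  then have TU: "T = UNIV" using clopen[of T] oT cT by auto
  have hK: "h t \<in> tflat ` K" for t using \<open>T = h -` (tflat ` K)\<close> TU by auto
  show ?thesis
  proof (rule ccontr)
    assume ne: "tmult_r X \<Gamma> \<noteq> tmult_l \<Gamma> Y"
    obtain k where k: "k < g" "X!k * \<Gamma> \<noteq> \<Gamma> * Y!k"
    proof -
      have "\<exists>k<g. X!k * \<Gamma> \<noteq> \<Gamma> * Y!k"
      proof (rule ccontr)
        assume "\<not> ?thesis"
        then have "tmult_r X \<Gamma> = tmult_l \<Gamma> Y" unfolding tmult_r_def tmult_l_def
          by (intro nth_equalityI) (auto simp: lX lY)
        then show False using ne by simp
      qed
      then show ?thesis using that by blast
    qed
    have c1: "X!k * \<Gamma> \<in> carrier_mat n m" "\<Gamma> * Y!k \<in> carrier_mat n m" using cX[OF k(1)] cY[OF k(1)] G by auto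
    obtain i j where ij: "i < n" "j < m" "(X!k * \<Gamma>) $$ (i,j) \<noteq> (\<Gamma> * Y!k) $$ (i,j)"
    proof -
      have "\<exists>i<n. \<exists>j<m. (X!k * \<Gamma>) $$ (i,j) \<noteq> (\<Gamma> * Y!k) $$ (i,j)"
      proof (rule ccontr)
        assume "\<not> ?thesis"
        then have "X!k * \<Gamma> = \<Gamma> * Y!k" using c1 by (intro eq_matI) (simp_all del: index_mult_mat)
        then show False using k(2) by simp
      qed
      then show ?thesis using that by blast
    qed
    define d where "d = (X!k * \<Gamma> - \<Gamma> * Y!k) $$ (i,j)"
    have "d = (X!k * \<Gamma>) $$ (i,j) - (\<Gamma> * Y!k) $$ (i,j)" unfolding d_def
      by (rule index_minus_mat) (use ij c1 in auto)
    then have d0: "d \<noteq> 0" using ij(3) by simp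
    define p0 where "p0 = (k, i, n + j)"
    have bp: "b p0 = d"
    proof -
      have dd: "Zm c \<Gamma> (X!k) (Y!k) \<in> carrier_mat (n+m) (n+m)" for c using Zm_carrier[OF cX[OF k(1)] cY[OF k(1)]] .
      have "tflat (map2 (Zm c \<Gamma>) X Y) p0 = c * d" for c
        unfolding tflat_def p0_def d_def using k(1) ij lX lY dd[of c] cX[OF k(1)] cY[OF k(1)] G
        by (simp add: Zm_def)
      then show ?thesis unfolding b_def a_def by simp
    qed
    have cimg: "compact ((\<lambda>q. q p0) ` tflat ` K)"
      by (rule compact_continuous_image[OF continuous_on_subset[OF continuous_on_product_coordinates] cpt]) simp
    then obtain B where B: "\<And>z. z \<in> (\<lambda>q. q p0) ` tflat ` K \<Longrightarrow> norm z \<le> B"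
      using compact_imp_bounded bounded_iff by metis
    define t where "t = (B + norm (a p0) + 1) / norm d"
    have B0: "norm (h t p0) \<le> B" using B hK[of t] by auto
    have "norm (complex_of_real t * d) = \<bar>t\<bar> * norm d" by (simp add: norm_mult)
    also have "\<dots> = B + norm (a p0) + 1"
    proof -
      have "B \<ge> 0" using B0 norm_ge_zero order_trans by blast
      then show ?thesis unfolding t_def using d0 by simp
    qed
    finally have n1: "norm (complex_of_real t * d) = B + norm (a p0) + 1" .
    have "norm (complex_of_real t * d) \<le> norm (a p0 + complex_of_real t * d) + norm (a p0)"
      using norm_triangle_ineq4[of "a p0 + complex_of_real t * d" "a p0"] by simp
    then show False using n1 B0 unfolding hab bp by simp
  qed
qed

end
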